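(* Let $\lambda>0$, $d_v>0$, $\epsilon\ge0$, $m=\lambda\pi d_v^2$, $k\ge0$, and let $r_1,\dots,r_k\ge0$ be given ranges (the observed ranges $r_i=\|\tilde{\mathbf x}_i\|_2$ at $\mathbf x$), with $f(\mathbf x)$ the set of all orderings of $(r_1,\dots,r_k)$. Put $A_i=\{\mathbf y\in\mathbb R^2:\ |\|\mathbf y\|_2-r_i|\le\epsilon\}$, i.e. $\mathbf b(\mathbf 0,r_i+\epsilon)\setminus\mathbf b(\mathbf 0,r_i-\epsilon)$. Then $$\mathbb P\big[\Delta_s(f(\mathbf x),F(\mathbf 0))\le\epsilon\big]=\frac{m^k}{k!}e^{-m}\cdot\mathbb P\big[\exists\text{ an ordering }(\tilde{\mathbf X}_1,\dots,\tilde{\mathbf X}_k)\text{ of the visible landmarks at }\mathbf 0\text{ with }\tilde{\mathbf X}_i\in A_i\ \forall i\ \big|\ N_{\mathbf 0}=k\big],$$ i.e. $\frac{m^k}{k!}e^{-m}\,\mathbb E\big[\bigvee_{\mathbf R_0\in F(\mathbf 0)}\prod_{i=1}^k\mathbf 1(\tilde{\mathbf X}_i\in A_i)\,\big|\,N_{\mathbf 0}=k\big]$, where $\mathbf R_0=(\|\tilde{\mathbf X}_1\|_2,\dots,\|\tilde{\mathbf X}_k\|_2)$ and $\bigvee$ is logical OR.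
   Context: Landmarks seen from the origin are the points of a homogeneous Poisson point process $\Phi_{\mathbf 0}$ of intensity $\lambda$ on $\mathbb R^2$; a landmark is visible from $\mathbf 0$ if its distance to $\mathbf 0$ is at most $d_v$, and $N_{\mathbf 0}$ is the number of visible landmarks. The random measurement $F(\mathbf 0)$ is the set of all vectors in $\mathbb R^{N_{\mathbf 0}}$ obtained by listing, in some order, the distances from $\mathbf 0$ to the visible landmarks. For vectors, $\Delta_v(\mathbf u,\mathbf w)=\|\mathbf u-\mathbf w\|_\infty$ if they have the same dimension (equal to $0$ if both are empty) and $\infty$ otherwise; for sets of vectors, $\Delta_s(f,F)=\min_{\mathbf u\in f,\mathbf w\in F}\Delta_v(\mathbf u,\mathbf w)$. $\mathbf b(\mathbf c,\rho)$ denotes the Euclidean ball of radius $\rho$ centred at $\mathbf c$ (empty if $\rho<0$). *)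

theory Defs
  imports "HOL-Analysis.Analysis" "HOL-Probability.Probability"
begin

text \<open>Poisson point process of intensity lam on the plane, restricted to the visibility
disk cball 0 dv (only visible landmarks matter).  Standard construction: the number of
points N is Poisson with mean lam * pi * dv^2, and the points are the first N terms of an
i.i.d. sequence of uniform points on the disk.\<close>

definition visible_pp :: "real \<Rightarrow> real \<Rightarrow> (nat \<times> (nat \<Rightarrow> real^2)) measure" where
  "visible_pp lam dv =
     measure_pmf (poisson_pmf (lam * pi * dv\<^sup>2)) \<Otimes>\<^sub>M
     (\<Pi>\<^sub>M i\<in>(UNIV::nat set). uniform_measure lborel (cball (0::real^2) dv))"

definition N0 :: "nat \<times> (nat \<Rightarrow> real^2) \<Rightarrow> nat" where
  "N0 \<omega> = fst \<omega>"

definition landmark :: "nat \<times> (nat \<Rightarrow> real^2) \<Rightarrow> nat \<Rightarrow> real^2" where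
  "landmark \<omega> i = snd \<omega> i"

definition meas_F :: "nat \<times> (nat \<Rightarrow> real^2) \<Rightarrow> real list set" where
  "meas_F \<omega> = {map (\<lambda>i. dist 0 (landmark \<omega> (\<sigma> i))) [0..<N0 \<omega>] | \<sigma>. \<sigma> permutes {..<N0 \<omega>}}"

definition orderings :: "real list \<Rightarrow> real list set" where
  "orderings r = {map (\<lambda>i. r ! (\<sigma> i)) [0..<length r] | \<sigma>. \<sigma> permutes {..<length r}}"

definition Delta_v :: "real list \<Rightarrow> real list \<Rightarrow> ereal" where
  "Delta_v u w =
     (if length u = length w
      then ereal (if u = [] then 0 else Max {\<bar>u ! i - w ! i\<bar> | i. i < length u})
      else \<infinity>)"

definition Delta_s :: "real list set \<Rightarrow> real list set \<Rightarrow> ereal" where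
  "Delta_s f F = (INF u\<in>f. INF w\<in>F. Delta_v u w)"

end

theory Submission
  imports Defs
begin

lemma INF_le_finite:
  fixes g :: "'a \<Rightarrow> 'b::complete_linorder"
  assumes "finite S" "S \<noteq> {}"
  shows "(INF x\<in>S. g x) \<le> e \<longleftrightarrow> (\<exists>x\<in>S. g x \<le> e)"
  using assms
proof (induction S rule: finite_ne_induct)
  case (singleton x) then show ?case by simp
next
  case (insert x F) then show ?case by (simp add: inf_min min_le_iff_disj)
qed

lemma finite_orderings: "finite (orderings r) \<and> orderings r \<noteq> {}"
proof -
  have "orderings r = (\<lambda>\<sigma>. map (\<lambda>i. r ! (\<sigma> i)) [0..<length r]) ` {\<sigma>. \<sigma> permutes {..<length r}}"
    unfolding orderings_def by auto
  moreover have "id permutes {..<length r}" by (simp add: permutes_id)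
  ultimately show ?thesis using finite_permutations[of "{..<length r}"] by (auto intro!: exI[of _ id])
qed

lemma finite_meas_F: "finite (meas_F w) \<and> meas_F w \<noteq> {}"
proof -
  have "meas_F w = (\<lambda>\<sigma>. map (\<lambda>i. dist 0 (landmark w (\<sigma> i))) [0..<N0 w]) ` {\<sigma>. \<sigma> permutes {..<N0 w}}"
    unfolding meas_F_def by auto
  moreover have "id permutes {..<N0 w}" by (simp add: permutes_id)
  ultimately show ?thesis using finite_permutations[of "{..<N0 w}"] by (auto intro!: exI[of _ id])
qed

lemma Delta_s_le:
  "Delta_s (orderings r) (meas_F w) \<le> ereal e \<longleftrightarrow>
   (\<exists>u\<in>orderings r. \<exists>v\<in>meas_F w. Delta_v u v \<le> ereal e)"
  unfolding Delta_s_def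
  using finite_orderings[of r] finite_meas_F[of w]
  by (simp add: INF_le_finite)

lemma Delta_v_le:
  assumes "length u = n" "length v = n" "e \<ge> 0"
  shows "Delta_v u v \<le> ereal e \<longleftrightarrow> (\<forall>i<n. \<bar>u ! i - v ! i\<bar> \<le> e)"
proof (cases "n = 0")
  case True then show ?thesis using assms by (simp add: Delta_v_def)
next
  case False
  have fin: "finite {\<bar>u ! i - v ! i\<bar> | i. i < n}" by simp
  have ne: "{\<bar>u ! i - v ! i\<bar> | i. i < n} \<noteq> {}" using False by auto
  have "u \<noteq> []" using False assms by auto
  then show ?thesis using assms Max_le_iff[OF fin ne] by (auto simp: Delta_v_def)
qed

lemma event_iff:
  assumes "length r = k" "eps \<ge> 0"
  shows "Delta_s (orderings r) (meas_F w) \<le> ereal eps \<longleftrightarrow>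
    N0 w = k \<and> (\<exists>\<sigma>. \<sigma> permutes {..<N0 w} \<and> (\<forall>i<k. \<bar>norm (landmark w (\<sigma> i)) - r ! i\<bar> \<le> eps))"
    (is "?L \<longleftrightarrow> ?R")
proof
  assume ?L
  then obtain u v where u: "u \<in> orderings r" and v: "v \<in> meas_F w" and le: "Delta_v u v \<le> ereal eps"
    unfolding Delta_s_le by blast
  from u obtain \<sigma> where s: "\<sigma> permutes {..<k}" and ud: "u = map (\<lambda>i. r ! (\<sigma> i)) [0..<k]"
    unfolding orderings_def using assms by auto
  from v obtain \<tau> where t: "\<tau> permutes {..<N0 w}" and vd: "v = map (\<lambda>i. dist 0 (landmark w (\<tau> i))) [0..<N0 w]"
    unfolding meas_F_def by auto
  have nk: "N0 w = k"
  proof (rule ccontr)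
    assume "N0 w \<noteq> k"
    then have "Delta_v u v = \<infinity>" unfolding Delta_v_def ud vd by simp
    with le show False by simp
  qed
  have all: "\<forall>i<k. \<bar>r ! (\<sigma> i) - norm (landmark w (\<tau> i))\<bar> \<le> eps"
    using le Delta_v_le[of u k v eps] assms(2) ud vd nk by (simp add: dist_0_norm)
  define \<pi> where "\<pi> = \<tau> \<circ> inv \<sigma>"
  have p: "\<pi> permutes {..<N0 w}" unfolding \<pi>_def using s t nk
    by (simp add: permutes_compose permutes_inv)
  have "\<forall>i<k. \<bar>norm (landmark w (\<pi> i)) - r ! i\<bar> \<le> eps"
  proof (intro allI impI)
    fix i assume i: "i < k"
    define j where "j = inv \<sigma> i"
    have sj: "\<sigma> j = i" unfolding j_def using s by (meson permutes_inverses(1))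
    have "j < k" unfolding j_def using s i
      by (metis lessThan_iff permutes_inv permutes_in_image)
    then have "\<bar>r ! (\<sigma> j) - norm (landmark w (\<tau> j))\<bar> \<le> eps" using all by blast
    then show "\<bar>norm (landmark w (\<pi> i)) - r ! i\<bar> \<le> eps"
      unfolding \<pi>_def using sj j_def by (simp add: abs_minus_commute)
  qed
  with p nk show ?R by blast
next
  assume ?R
  then obtain \<pi> where nk: "N0 w = k" and p: "\<pi> permutes {..<N0 w}"
    and all: "\<forall>i<k. \<bar>norm (landmark w (\<pi> i)) - r ! i\<bar> \<le> eps" by blast
  define u where "u = map (\<lambda>i. r ! (id i)) [0..<k]"
  define v where "v = map (\<lambda>i. dist 0 (landmark w (\<pi> i))) [0..<N0 w]"
  have u: "u \<in> orderings r" unfolding orderings_def u_def using assms permutes_id by fastforce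
  have v: "v \<in> meas_F w" unfolding meas_F_def v_def using p by blast
  have "Delta_v u v \<le> ereal eps"
    using Delta_v_le[of u k v eps] assms(2) nk all unfolding u_def v_def
    by (simp add: dist_0_norm abs_minus_commute)
  then show ?L unfolding Delta_s_le using u v by blast
qed

lemma prob_N0:
  assumes "lam > 0" "dv > 0"
  shows "prob_space (visible_pp lam dv)"
    and "measure (visible_pp lam dv) {\<omega> \<in> space (visible_pp lam dv). N0 \<omega> = k}
         = (lam * pi * dv\<^sup>2) ^ k / fact k * exp (- (lam * pi * dv\<^sup>2))"
proof -
  let ?U = "uniform_measure lborel (cball (0::real^2) dv)"
  let ?P = "\<Pi>\<^sub>M i\<in>(UNIV::nat set). ?U"
  let ?Q = "measure_pmf (poisson_pmf (lam * pi * dv\<^sup>2))"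
  have "emeasure lborel (cball (0::real^2) dv) \<noteq> 0"
    using assms(2) by (metis content_cball_gt_0_iff emeasure_lborel_cball_finite measure_def
        enn2real_0 less_irrefl)
  moreover have "emeasure lborel (cball (0::real^2) dv) \<noteq> \<infinity>"
    using emeasure_lborel_cball_finite[of 0 dv] by (simp add: less_top)
  ultimately have pU: "prob_space ?U" by (rule prob_space_uniform_measure)
  have pP: "prob_space ?P" by (rule prob_space_PiM) (use pU in auto)
  interpret P: prob_space ?P by (rule pP)
  interpret Q: prob_space ?Q by (rule prob_space_measure_pmf)
  interpret PQ: pair_prob_space ?Q ?P by unfold_locales
  show "prob_space (visible_pp lam dv)" unfolding visible_pp_def by (rule PQ.prob_space_axioms)
  have pos: "lam * pi * dv\<^sup>2 > 0" using assms by simp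
  have "{\<omega> \<in> space (visible_pp lam dv). N0 \<omega> = k} = {k} \<times> space ?P"
    unfolding visible_pp_def N0_def by (auto simp: space_pair_measure)
  then have "measure (visible_pp lam dv) {\<omega> \<in> space (visible_pp lam dv). N0 \<omega> = k}
      = measure (?Q \<Otimes>\<^sub>M ?P) ({k} \<times> space ?P)" unfolding visible_pp_def by simp
  also have "\<dots> = measure ?Q {k} * measure ?P (space ?P)"
    by (simp add: measure_def P.emeasure_pair_measure_Times enn2real_mult)
  also have "\<dots> = pmf (poisson_pmf (lam * pi * dv\<^sup>2)) k" by (simp add: measure_pmf_single P.prob_space)
  also have "\<dots> = (lam * pi * dv\<^sup>2) ^ k / fact k * exp (- (lam * pi * dv\<^sup>2))"
    using pos by simp
  finally show "measure (visible_pp lam dv) {\<omega> \<in> space (visible_pp lam dv). N0 \<omega> = k}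
         = (lam * pi * dv\<^sup>2) ^ k / fact k * exp (- (lam * pi * dv\<^sup>2))" .
qed

theorem lemma9:
  fixes lam dv eps :: real and k :: nat and r :: "real list"
    and m :: real and A :: "nat \<Rightarrow> (real^2) set"
  assumes "lam > 0" and "dv > 0" and "eps \<ge> 0"
    and "length r = k" and "\<forall>i<k. r ! i \<ge> 0"
  defines "m \<equiv> lam * pi * dv\<^sup>2"
    and "A \<equiv> (\<lambda>i. {y. \<bar>norm y - r ! i\<bar> \<le> eps})"
  shows "\<P>(\<omega> in visible_pp lam dv. Delta_s (orderings r) (meas_F \<omega>) \<le> ereal eps)
       = m ^ k / fact k * exp (- m) *
         \<P>(\<omega> in visible_pp lam dv.
              (\<exists>\<sigma>. \<sigma> permutes {..<N0 \<omega>} \<and> (\<forall>i<k. landmark \<omega> (\<sigma> i) \<in> A i))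
            \<bar> N0 \<omega> = k)"
proof -
  let ?M = "visible_pp lam dv"
  have hk: "measure ?M {\<omega> \<in> space ?M. N0 \<omega> = k} = m ^ k / fact k * exp (- m)"
    using prob_N0[OF assms(1,2)] unfolding m_def by blast
  have m0: "m > 0" unfolding m_def using assms by simp
  have nz: "m ^ k / fact k * exp (- m) \<noteq> 0" using m0 by simp
  have seteq: "{\<omega> \<in> space ?M. Delta_s (orderings r) (meas_F \<omega>) \<le> ereal eps}
      = {\<omega> \<in> space ?M. (\<exists>\<sigma>. \<sigma> permutes {..<N0 \<omega>} \<and> (\<forall>i<k. landmark \<omega> (\<sigma> i) \<in> A i)) \<and> N0 \<omega> = k}"
    using event_iff[OF assms(4) assms(3)] unfolding A_def by auto
  have e1: "\<P>(\<omega> in ?M. Delta_s (orderings r) (meas_F \<omega>) \<le> ereal eps)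
     = \<P>(\<omega> in ?M. (\<exists>\<sigma>. \<sigma> permutes {..<N0 \<omega>} \<and> (\<forall>i<k. landmark \<omega> (\<sigma> i) \<in> A i)) \<and> N0 \<omega> = k)"
    using arg_cong[OF seteq, where f="measure ?M"] .
  show ?thesis unfolding cond_prob_def hk e1 using nz m0 by simp
qed

end
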